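(* Assume (SM), (LIP), (POT) and consider the algorithm AILFEM of the context with arbitrary $\lambda_{\mathrm{lin}},\lambda_{\mathrm{alg}}>0$. Define $\tau:=M+3M(L[3M]/\alpha)^{1/2}\ (\ge4M)$. Let $k\in\mathbb{N}_0$ with $0\le k<\underline{k}[\ell]$ and $|||u_\ell^{k,\underline{i}}|||\le\tau$. Then, if $i_{\min}\in\mathbb{N}$ satisfies $q_{\mathrm{alg}}^{i_{\min}}\le1/3$ and $0<\delta<\min\{1/L[5\tau],\,2\alpha/L[2\tau]^2\}$, it holds that $$0\le\Big(\frac1{2\delta}-\frac{L[5\tau]}2\Big)|||u_\ell^{k+1,\underline{i}}-u_\ell^{k,\underline{i}}|||^2\le\mathcal{E}(u_\ell^{k,\underline{i}})-\mathcal{E}(u_\ell^{k+1,\underline{i}})\le\Big(\frac1{\delta(1-q_{\mathrm{alg}}^{i_{\min}})}-\frac\alpha2\Big)|||u_\ell^{k+1,\underline{i}}-u_\ell^{k,\underline{i}}|||^2$$ for all $(\ell,k+1,\underline{i})\in\mathcal{Q}$.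
   Context: Abstract setting. Let $\mathcal{X}$ be a real Hilbert space with scalar product $\langle\!\langle\cdot,\cdot\rangle\!\rangle$ and norm $|||\cdot|||$, with dual space $\mathcal{X}'$ (norm $\|\cdot\|_{\mathcal{X}'}$, duality bracket $\langle\cdot,\cdot\rangle$). Let $\mathcal{A}:\mathcal{X}\to\mathcal{X}'$ be a nonlinear operator and $F\in\mathcal{X}'$ with $\mathcal{A}0\neq F$. Conditions: (SM) there is $\alpha>0$ with $\alpha|||v-w|||^2\le\langle\mathcal{A}v-\mathcal{A}w,v-w\rangle$ for all $v,w\in\mathcal{X}$; (LIP) for every $\vartheta>0$ there is $L[\vartheta]>0$ with $\langle\mathcal{A}v-\mathcal{A}w,\varphi\rangle\le L[\vartheta]\,|||v-w|||\,|||\varphi|||$ for all $v,w,\varphi\in\mathcal{X}$ with $\max\{|||v|||,|||v-w|||\}\le\vartheta$; (POT) there is a Gâteaux differentiable $\mathcal{P}:\mathcal{X}\to\mathbb{R}$ with $\langle\mathcal{A}w,v\rangle=\lim_{t\to0}(\mathcal{P}(w+tv)-\mathcal{P}(w))/t$ for all $v,w$. The energy is $\mathcal{E}(v):=\mathcal{P}(v)-F(v)$. For every closed subspace $\mathcal{Y}\subseteq\mathcal{X}$ there is a unique $u^\star_{\mathcal{Y}}\in\mathcal{Y}$ with $\langle\mathcal{A}u^\star_{\mathcal{Y}},v\rangle=F(v)$ for all $v\in\mathcal{Y}$; $u^\star:=u^\star_{\mathcal{X}}$. Put $M:=\|F-\mathcal{A}0\|_{\mathcal{X}'}/\alpha$.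 Meshes. $\mathcal{T}_0$ is an initial conforming simplicial triangulation; $\mathtt{refine}(\mathcal{T}_H,\mathcal{M}_H)$ is the coarsest newest-vertex-bisection (NVB) refinement of $\mathcal{T}_H$ in which all elements of $\mathcal{M}_H\subseteq\mathcal{T}_H$ are refined; $\mathbb{T}(\mathcal{T}_H)$ is the set of meshes obtained from $\mathcal{T}_H$ by finitely many NVB steps, $\mathbb{T}:=\mathbb{T}(\mathcal{T}_0)$. Each $\mathcal{T}_H\in\mathbb{T}$ is associated with a finite-dimensional subspace $\mathcal{X}_H\subset\mathcal{X}$, nested: $\mathcal{X}_H\subseteq\mathcal{X}_h$ if $\mathcal{T}_h\in\mathbb{T}(\mathcal{T}_H)$. Write $u_H^\star:=u^\star_{\mathcal{X}_H}$. Zarantonello map: for $\delta>0$, $w_H\in\mathcal{X}_H$, $\Phi_H(\delta;w_H)\in\mathcal{X}_H$ is the unique solution of $\langle\!\langle\Phi_H(\delta;w_H),v_H\rangle\!\rangle=\langle\!\langle w_H,v_H\rangle\!\rangle+\delta[F(v_H)-\langle\mathcal{A}w_H,v_H\rangle]$ for all $v_H\in\mathcal{X}_H$. Algebraic solver: there is $0<q_{\mathrm{alg}}<1$ and for each $\mathcal{T}_H$ a map $\Psi_H:\mathcal{X}'\times\mathcal{X}_H\to\mathcal{X}_H$ such that for every $\varphi\in\mathcal{X}'$, with $w_H^\star\in\mathcal{X}_H$ solving $\langle\!\langle w_H^\star,v_H\rangle\!\rangle=\varphi(v_H)$ for all $v_H\in\mathcal{X}_H$, one has $|||w_H^\star-\Psi_H(\varphi;w_H)|||\le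 q_{\mathrm{alg}}|||w_H^\star-w_H|||$ for all $w_H\in\mathcal{X}_H$. One writes $\Psi_H(w_H^\star;\cdot)$ for $\Psi_H(\varphi;\cdot)$. Estimator: for $\mathcal{T}_H\in\mathbb{T}$, $T\in\mathcal{T}_H$, $v_H\in\mathcal{X}_H$ a number $\eta_H(T,v_H)\ge0$ is given; $\eta_H(\mathcal{U},v_H):=(\sum_{T\in\mathcal{U}}\eta_H(T,v_H)^2)^{1/2}$ for $\mathcal{U}\subseteq\mathcal{T}_H$ and $\eta_H(v_H):=\eta_H(\mathcal{T}_H,v_H)$. Index $\ell$ refers to $\mathcal{T}_\ell$, $\mathcal{X}_\ell$, $\Phi_\ell$, $\Psi_\ell$, $\eta_\ell$, $u_\ell^\star$. Algorithm AILFEM. Input: $\mathcal{T}_0$, $0<\theta\le1$, $C_{\mathrm{mark}}\ge1$, $\lambda_{\mathrm{lin}},\lambda_{\mathrm{alg}}>0$, $i_{\min}\in\mathbb{N}$, $\delta>0$, $u_0^{0,0}\in\mathcal{X}_0$ with $|||u_0^{0,0}|||\le2M$; set $u_0^{0,\star}:=u_0^{0,\underline{i}}:=u_0^{0,0}$. For $\ell=0,1,2,\dots$: (I) For $k=1,2,\dots$: set $u_\ell^{k,0}:=u_\ell^{k-1,\underline{i}}$ and $u_\ell^{k,\star}:=\Phi_\ell(\delta;u_\ell^{k-1,\underline{i}})$ (not computed). For $i=1,2,\dots$: compute $u_\ell^{k,i}:=\Psi_\ell(u_\ell^{k,\star};u_\ell^{k,i-1})$ and $\eta_\ell(u_\ell^{k,i})$;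 terminate the $i$-loop with $\underline{i}[\ell,k]:=i$ if $|||u_\ell^{k,i-1}-u_\ell^{k,i}|||\le\lambda_{\mathrm{alg}}[\lambda_{\mathrm{lin}}\eta_\ell(u_\ell^{k,i})+|||u_\ell^{k,i}-u_\ell^{k,0}|||]$ and $i_{\min}\le i$. Write $u_\ell^{k,\underline{i}}:=u_\ell^{k,\underline{i}[\ell,k]}$. Terminate the $k$-loop with $\underline{k}[\ell]:=k$ if $\mathcal{E}(u_\ell^{k,0})-\mathcal{E}(u_\ell^{k,\underline{i}})\le\lambda_{\mathrm{lin}}^2\eta_\ell(u_\ell^{k,\underline{i}})^2$ and $|||u_\ell^{k,\underline{i}}|||\le2M$. (II) Choose $\mathcal{M}_\ell\subseteq\mathcal{T}_\ell$ with $\theta\,\eta_\ell(u_\ell^{\underline{k},\underline{i}})^2\le\eta_\ell(\mathcal{M}_\ell,u_\ell^{\underline{k},\underline{i}})^2$ and $\#\mathcal{M}_\ell\le C_{\mathrm{mark}}\min\{\#\mathcal{U}:\mathcal{U}\subseteq\mathcal{T}_\ell,\ \theta\eta_\ell(u_\ell^{\underline{k},\underline{i}})^2\le\eta_\ell(\mathcal{U},u_\ell^{\underline{k},\underline{i}})^2\}$. (III) $\mathcal{T}_{\ell+1}:=\mathtt{refine}(\mathcal{T}_\ell,\mathcal{M}_\ell)$ and $u_{\ell+1}^{0,0}:=u_{\ell+1}^{0,\underline{i}}:=u_{\ell+1}^{0,\star}:=u_\ell^{\underline{k},\underline{i}}$. Index set: $\mathcal{Q}:=\{(\ell,k,i)\in\mathbb{N}_0^3: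 u_\ell^{k,i}\text{ is used in the algorithm}\}$; $\underline{k}[\ell]:=\sup\{k\in\mathbb{N}:(\ell,k,0)\in\mathcal{Q}\}$, $\underline{i}[\ell,k]:=\sup\{i\in\mathbb{N}:(\ell,k,i)\in\mathcal{Q}\}$; "$(\ell,k,\underline{i})\in\mathcal{Q}$" means $(\ell,k,\underline{i}[\ell,k])\in\mathcal{Q}$. *)

theory Defs
  imports "HOL-Analysis.Analysis"
begin

text \<open>An element of the dual X' is modelled as a
  bounded linear functional 'a => real. The operator A : X -> X' is modelled as
  A :: 'a => 'a => real, where A w v denotes the duality bracket of A w and v.\<close>

definition dual_operator :: "('a::real_normed_vector \<Rightarrow> 'a \<Rightarrow> real) \<Rightarrow> bool" where
  "dual_operator A \<longleftrightarrow> (\<forall>w. bounded_linear (A w))"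

definition SM :: "real \<Rightarrow> ('a::real_normed_vector \<Rightarrow> 'a \<Rightarrow> real) \<Rightarrow> bool" where
  "SM \<alpha> A \<longleftrightarrow> \<alpha> > 0 \<and> (\<forall>v w. \<alpha> * (norm (v - w))\<^sup>2 \<le> A v (v - w) - A w (v - w))"

definition LIP :: "('a::real_normed_vector \<Rightarrow> 'a \<Rightarrow> real) \<Rightarrow> (real \<Rightarrow> real) \<Rightarrow> bool" where
  "LIP A L \<longleftrightarrow> (\<forall>\<theta>>0. L \<theta> > 0 \<and>
     (\<forall>v w \<phi>. max (norm v) (norm (v - w)) \<le> \<theta> \<longrightarrow>
        A v \<phi> - A w \<phi> \<le> L \<theta> * norm (v - w) * norm \<phi>))"

definition POT :: "('a::real_normed_vector \<Rightarrow> 'a \<Rightarrow> real) \<Rightarrow> ('a \<Rightarrow> real) \<Rightarrow> bool" where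
  "POT A P \<longleftrightarrow> (\<forall>v w. ((\<lambda>t. (P (w + t *\<^sub>R v) - P w) / t) \<longlongrightarrow> A w v) (at 0))"

definition energy :: "('a \<Rightarrow> real) \<Rightarrow> ('a \<Rightarrow> real) \<Rightarrow> 'a \<Rightarrow> real" where
  "energy P F v = P v - F v"

definition Mconst :: "real \<Rightarrow> ('a::real_normed_vector \<Rightarrow> 'a \<Rightarrow> real) \<Rightarrow> ('a \<Rightarrow> real) \<Rightarrow> real" where
  "Mconst \<alpha> A F = onorm (\<lambda>v. F v - A 0 v) / \<alpha>"

definition fd_subspace :: "'a::real_vector set \<Rightarrow> bool" where
  "fd_subspace X \<longleftrightarrow> subspace X \<and> (\<exists>B. finite B \<and> X = span B)"

definition riesz_in :: "'a::real_inner set \<Rightarrow> ('a \<Rightarrow> real) \<Rightarrow> 'a \<Rightarrow> bool" where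
  "riesz_in X \<phi> z \<longleftrightarrow> z \<in> X \<and> (\<forall>v\<in>X. inner z v = \<phi> v)"

text \<open>Right-hand side of the Zarantonello step: v |-> <<w,v>> + delta [F v - <A w, v>];
  its Riesz representative in X_l is Phi_l(delta; w).\<close>
definition zar_rhs :: "('a::real_inner \<Rightarrow> 'a \<Rightarrow> real) \<Rightarrow> ('a \<Rightarrow> real) \<Rightarrow> real \<Rightarrow> 'a \<Rightarrow> 'a \<Rightarrow> real" where
  "zar_rhs A F \<delta> w = (\<lambda>v. inner w v + \<delta> * (F v - A w v))"

definition alg_solver :: "'a::real_inner set \<Rightarrow> real \<Rightarrow> (('a \<Rightarrow> real) \<Rightarrow> 'a \<Rightarrow> 'a) \<Rightarrow> bool" where
  "alg_solver X q \<Psi> \<longleftrightarrow> 0 < q \<and> q < 1 \<and>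
     (\<forall>\<phi> w wstar. bounded_linear \<phi> \<longrightarrow> riesz_in X \<phi> wstar \<longrightarrow> w \<in> X \<longrightarrow>
        \<Psi> \<phi> w \<in> X \<and> norm (wstar - \<Psi> \<phi> w) \<le> q * norm (wstar - w))"

text \<open>Final iterate of the k-th linearization step: u_l^{k,ibar}; for k = 0 it is u_l^{0,0}.\<close>
definition Ufin :: "(nat \<Rightarrow> nat \<Rightarrow> 'a) \<Rightarrow> (nat \<Rightarrow> nat) \<Rightarrow> nat \<Rightarrow> 'a" where
  "Ufin u ib k = (if k = 0 then u 0 0 else u k (ib k))"

definition alg_stop :: "('a::real_normed_vector \<Rightarrow> real) \<Rightarrow> real \<Rightarrow> real \<Rightarrow> nat \<Rightarrow> (nat \<Rightarrow> nat \<Rightarrow> 'a) \<Rightarrow> nat \<Rightarrow> nat \<Rightarrow> bool" where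
  "alg_stop \<eta> lamlin lamalg imin u k i \<longleftrightarrow>
     norm (u k (i - 1) - u k i) \<le> lamalg * (lamlin * \<eta> (u k i) + norm (u k i - u k 0)) \<and> imin \<le> i"

definition lin_stop :: "('a::real_normed_vector \<Rightarrow> real) \<Rightarrow> ('a \<Rightarrow> real) \<Rightarrow> real \<Rightarrow> real \<Rightarrow> (nat \<Rightarrow> nat \<Rightarrow> 'a) \<Rightarrow> (nat \<Rightarrow> nat) \<Rightarrow> nat \<Rightarrow> bool" where
  "lin_stop E \<eta> lamlin M u ib k \<longleftrightarrow>
     E (u k 0) - E (Ufin u ib k) \<le> lamlin\<^sup>2 * (\<eta> (Ufin u ib k))\<^sup>2 \<and> norm (Ufin u ib k) \<le> 2 * M"

text \<open>Run of step (I) of AILFEM on a fixed level l (discrete space X, solver Psi, estimator eta),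
  started from u_l^{0,0} = u 0 0, in which the linearization steps 1..K have been carried out,
  each i-loop terminated (at index ib k), and the k-loop has not stopped at any of the
  steps 1..K-1, i.e. (l,K,ibar) is in Q.\<close>
definition ailfem_level_run ::
  "'a::real_inner set \<Rightarrow> (('a \<Rightarrow> real) \<Rightarrow> 'a \<Rightarrow> 'a) \<Rightarrow> ('a \<Rightarrow> real) \<Rightarrow>
   ('a \<Rightarrow> 'a \<Rightarrow> real) \<Rightarrow> ('a \<Rightarrow> real) \<Rightarrow> ('a \<Rightarrow> real) \<Rightarrow> real \<Rightarrow>
   real \<Rightarrow> real \<Rightarrow> nat \<Rightarrow> real \<Rightarrow>
   (nat \<Rightarrow> nat \<Rightarrow> 'a) \<Rightarrow> (nat \<Rightarrow> nat) \<Rightarrow> nat \<Rightarrow> bool" where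
  "ailfem_level_run X \<Psi> \<eta> A F P M lamlin lamalg imin \<delta> u ib K \<longleftrightarrow>
     u 0 0 \<in> X \<and> norm (u 0 0) \<le> 2 * M \<and>
     (\<forall>k\<in>{1..K}.
        u k 0 = Ufin u ib (k - 1) \<and> 1 \<le> ib k \<and>
        (\<forall>i\<in>{1..ib k}. u k i = \<Psi> (zar_rhs A F \<delta> (Ufin u ib (k - 1))) (u k (i - 1))) \<and>
        (\<forall>i\<in>{1..<ib k}. \<not> alg_stop \<eta> lamlin lamalg imin u k i) \<and>
        alg_stop \<eta> lamlin lamalg imin u k (ib k)) \<and>
     (\<forall>k\<in>{1..<K}. \<not> lin_stop (energy P F) \<eta> lamlin M u ib k)"

end

theory Submission
  imports Defs
begin

lemma riesz_exists:
  fixes B :: "'a::real_inner set"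
  assumes "finite B" "linear \<phi>"
  shows "\<exists>z\<in>span B. \<forall>v\<in>span B. inner z v = \<phi> v"
  using assms(1) assms(2)
proof (induction B arbitrary: \<phi> rule: finite_induct)
  case empty
  then show ?case by (auto simp: linear_0)
next
  case (insert b B)
  obtain z0 where z0: "z0 \<in> span B" "\<forall>v\<in>span B. inner z0 v = \<phi> v"
    using insert.IH insert.prems by blast
  have lb: "linear (\<lambda>v. inner b v)" by (simp add: linearI inner_add_right)
  obtain p where p: "p \<in> span B" "\<forall>v\<in>span B. inner p v = inner b v"
    using insert.IH[OF lb] by blast
  define c where "c = b - p"
  have corth: "inner c v = 0" if "v \<in> span B" for v
    using p that by (simp add: c_def inner_diff_left)
  define \<beta> where "\<beta> = \<phi> c / inner c c"
  have beta: "\<beta> * inner c c = \<phi> c"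
  proof (cases "c = 0")
    case True then show ?thesis using insert.prems by (simp add: \<beta>_def linear_0)
  next
    case False then show ?thesis by (simp add: \<beta>_def)
  qed
  define z where "z = z0 + \<beta> *\<^sub>R c"
  have cspan: "c \<in> span (insert b B)"
    unfolding c_def by (meson insert_iff span_base span_diff span_mono subset_insertI subsetD p(1))
  have "z \<in> span (insert b B)"
    unfolding z_def using z0(1) cspan by (meson span_add span_mono span_scale subset_insertI subsetD)
  moreover have "inner z v = \<phi> v" if v: "v \<in> span (insert b B)" for v
  proof -
    obtain s where s: "v - s *\<^sub>R b \<in> span B" using v span_breakdown_eq by blast
    define x where "x = v - s *\<^sub>R b + s *\<^sub>R p"
    have x: "x \<in> span B" unfolding x_def using s p(1) by (simp add: span_add span_scale)
    have vx: "v = x + s *\<^sub>R c" by (simp add: x_def c_def algebra_simps)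
    have "inner z v = inner z0 x + s * inner z0 c + \<beta> * inner c x + \<beta> * s * inner c c"
      by (simp add: z_def vx inner_add_left inner_add_right algebra_simps)
    also have "\<dots> = \<phi> x + s * \<phi> c"
      using z0 corth[OF x] corth[OF z0(1)] x beta by (simp add: inner_commute)
    also have "\<dots> = \<phi> v" using insert.prems by (simp add: vx linear_add linear_scale)
    finally show ?thesis .
  qed
  ultimately show ?case by blast
qed

lemma riesz_fd:
  assumes "fd_subspace X" "bounded_linear \<phi>"
  shows "\<exists>z. riesz_in X \<phi> z"
proof -
  obtain B where "finite B" "X = span B" using assms(1) unfolding fd_subspace_def by blast
  moreover have "linear \<phi>" using assms(2) bounded_linear.linear by blast
  ultimately show ?thesis using riesz_exists unfolding riesz_in_def by blast
qed

lemma quad_lower: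
  fixes g D :: "real \<Rightarrow> real"
  assumes "\<And>t. (g has_real_derivative D t) (at t)"
    "\<And>t. 0 \<le> t \<Longrightarrow> t \<le> 1 \<Longrightarrow> c * t \<le> D t - D 0"
  shows "D 0 + c / 2 \<le> g 1 - g 0"
proof -
  define h where "h t = g t - t * D 0 - c * t^2 / 2" for t
  have "h 0 \<le> h 1"
  proof (rule deriv_nonneg_imp_mono[where g=h and a=0 and b=1 and g' = "\<lambda>t. D t - D 0 - c * t"])
    fix x :: real
    show "(h has_real_derivative D x - D 0 - c * x) (at x)"
    proof -
      have "((\<lambda>t. g t - t * D 0 - c * t^2 / 2) has_real_derivative (D x - 1 * D 0 - c * (of_nat 2 * x ^ (2 - 1)) / 2)) (at x)"
        by (intro DERIV_diff DERIV_cmult_right DERIV_cdivide DERIV_cmult assms(1) DERIV_ident) (use DERIV_pow[of 2 x UNIV] in simp)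
      then show ?thesis unfolding h_def by (simp add: fun_eq_iff)
    qed
    assume "x \<in> {0..1}" then show "0 \<le> D x - D 0 - c * x" using assms(2) by auto
  qed simp
  then show ?thesis by (simp add: h_def)
qed

lemma quad_upper:
  fixes g D :: "real \<Rightarrow> real"
  assumes "\<And>t. (g has_real_derivative D t) (at t)"
    "\<And>t. 0 \<le> t \<Longrightarrow> t \<le> 1 \<Longrightarrow> D t - D 0 \<le> c * t"
  shows "g 1 - g 0 \<le> D 0 + c / 2"
proof -
  have "- D 0 + (- c) / 2 \<le> (- g 1) - (- g 0)"
  proof (rule quad_lower[where D = "\<lambda>t. - D t"])
    show "\<And>t. ((\<lambda>x. - g x) has_real_derivative - D t) (at t)" by (intro DERIV_minus assms(1))
    show "\<And>t. 0 \<le> t \<Longrightarrow> t \<le> 1 \<Longrightarrow> - c * t \<le> - D t - - D 0" using assms(2) by force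
  qed
  then show ?thesis by simp
qed

lemma pot_deriv:
  assumes "POT A P" "bounded_linear F"
  shows "((\<lambda>t. energy P F (w + t *\<^sub>R e)) has_real_derivative (A (w + t *\<^sub>R e) e - F e)) (at t)"
proof -
  interpret F: bounded_linear F by fact
  have lim: "((\<lambda>h. (P ((w + t *\<^sub>R e) + h *\<^sub>R e) - P (w + t *\<^sub>R e)) / h) \<longlongrightarrow> A (w + t *\<^sub>R e) e) (at 0)"
    using assms(1) unfolding POT_def by blast
  have "((\<lambda>h. (P ((w + t *\<^sub>R e) + h *\<^sub>R e) - P (w + t *\<^sub>R e)) / h - F e) \<longlongrightarrow> A (w + t *\<^sub>R e) e - F e) (at 0)"
    by (intro tendsto_intros lim)
  then have "((\<lambda>h. (energy P F (w + (t + h) *\<^sub>R e) - energy P F (w + t *\<^sub>R e)) / h) \<longlongrightarrow> A (w + t *\<^sub>R e) e - F e) (at (0::real))"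
  proof (rule Lim_transform_eventually)
    show "\<forall>\<^sub>F h in at 0. (P ((w + t *\<^sub>R e) + h *\<^sub>R e) - P (w + t *\<^sub>R e)) / h - F e =
        (energy P F (w + (t + h) *\<^sub>R e) - energy P F (w + t *\<^sub>R e)) / h"
      unfolding eventually_at_filter
    proof (intro always_eventually allI impI)
      fix h :: real assume "h \<noteq> 0"
      have "energy P F (w + (t + h) *\<^sub>R e) - energy P F (w + t *\<^sub>R e)
           = (P ((w + t *\<^sub>R e) + h *\<^sub>R e) - P (w + t *\<^sub>R e)) - h * F e"
        by (simp add: energy_def F.add F.scale scaleR_add_left algebra_simps)
      then show "(P ((w + t *\<^sub>R e) + h *\<^sub>R e) - P (w + t *\<^sub>R e)) / h - F e =
        (energy P F (w + (t + h) *\<^sub>R e) - energy P F (w + t *\<^sub>R e)) / h"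
        using \<open>h \<noteq> 0\<close> by (simp add: diff_divide_distrib)
    qed
  qed
  then show ?thesis unfolding DERIV_def by simp
qed

theorem lemma7:
  fixes A :: "'a::{real_inner, complete_space} \<Rightarrow> 'a \<Rightarrow> real"
    and F :: "'a \<Rightarrow> real" and P :: "'a \<Rightarrow> real"
    and \<alpha> :: real and L :: "real \<Rightarrow> real"
    and X :: "'a set" and \<Psi> :: "('a \<Rightarrow> real) \<Rightarrow> 'a \<Rightarrow> 'a" and qalg :: real
    and \<eta> :: "'a \<Rightarrow> real"
    and lamlin lamalg \<delta> :: real and imin :: nat
    and u :: "nat \<Rightarrow> nat \<Rightarrow> 'a" and ib :: "nat \<Rightarrow> nat" and k :: nat
  assumes dual: "dual_operator A" and F_lin: "bounded_linear F"
    and A0F: "A 0 \<noteq> F"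
    and sm: "SM \<alpha> A" and lip: "LIP A L" and pot: "POT A P"
    and Xl: "fd_subspace X"
    and solver: "alg_solver X qalg \<Psi>"
    and eta_nonneg: "\<forall>v. 0 \<le> \<eta> v"
    and lam: "lamlin > 0" "lamalg > 0"
    and imin: "1 \<le> imin"
    and run: "ailfem_level_run X \<Psi> \<eta> A F P (Mconst \<alpha> A F) lamlin lamalg imin \<delta> u ib (k + 1)"
    and bound: "norm (Ufin u ib k) \<le> Mconst \<alpha> A F + 3 * Mconst \<alpha> A F * sqrt (L (3 * Mconst \<alpha> A F) / \<alpha>)"
    and qmin: "qalg ^ imin \<le> 1 / 3"
    and delta: "0 < \<delta>"
      "\<delta> < min (1 / L (5 * (Mconst \<alpha> A F + 3 * Mconst \<alpha> A F * sqrt (L (3 * Mconst \<alpha> A F) / \<alpha>))))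
                (2 * \<alpha> / (L (2 * (Mconst \<alpha> A F + 3 * Mconst \<alpha> A F * sqrt (L (3 * Mconst \<alpha> A F) / \<alpha>))))\<^sup>2)"
  shows "let \<tau> = Mconst \<alpha> A F + 3 * Mconst \<alpha> A F * sqrt (L (3 * Mconst \<alpha> A F) / \<alpha>);
             d = norm (Ufin u ib (k + 1) - Ufin u ib k);
             dE = energy P F (Ufin u ib k) - energy P F (Ufin u ib (k + 1))
         in 0 \<le> (1 / (2 * \<delta>) - L (5 * \<tau>) / 2) * d\<^sup>2
          \<and> (1 / (2 * \<delta>) - L (5 * \<tau>) / 2) * d\<^sup>2 \<le> dE
          \<and> dE \<le> (1 / (\<delta> * (1 - qalg ^ imin)) - \<alpha> / 2) * d\<^sup>2"
proof -
  define M where "M = Mconst \<alpha> A F"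
  define \<tau> where "\<tau> = M + 3 * M * sqrt (L (3 * M) / \<alpha>)"
  define w where "w = Ufin u ib k"
  define u' where "u' = Ufin u ib (k + 1)"
  have alpha: "\<alpha> > 0" using sm unfolding SM_def by blast
  have Alin: "\<And>z. bounded_linear (A z)" using dual unfolding dual_operator_def by blast
  have FA0: "bounded_linear (\<lambda>v. F v - A 0 v)" by (intro bounded_linear_sub F_lin Alin)
  obtain x0 where x0: "F x0 - A 0 x0 \<noteq> 0" using A0F by (metis eq_iff_diff_eq_0 ext)
  have "0 < onorm (\<lambda>v. F v - A 0 v)" using onorm_pos_lt[OF FA0] x0 by blast
  then have Mpos: "M > 0" using alpha by (simp add: M_def Mconst_def)
  have onM: "onorm (\<lambda>v. F v - A 0 v) = \<alpha> * M" using alpha by (simp add: M_def Mconst_def)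
  have Lpos: "\<And>\<theta>. \<theta> > 0 \<Longrightarrow> L \<theta> > 0" using lip unfolding LIP_def by blast
  have Lip: "\<And>\<theta> v z \<phi>. \<theta> > 0 \<Longrightarrow> max (norm v) (norm (v - z)) \<le> \<theta> \<Longrightarrow> A v \<phi> - A z \<phi> \<le> L \<theta> * norm (v - z) * norm \<phi>"
    using lip unfolding LIP_def by blast
  have Aneg: "\<And>z x. A z (- x) = - A z x" using Alin by (metis bounded_linear.linear linear_neg)
  have Ascale: "\<And>z t x. A z (t *\<^sub>R x) = t * A z x" using Alin by (metis bounded_linear.linear linear_scale real_scaleR_def)
  have SMi: "\<And>v z. \<alpha> * (norm (v - z))\<^sup>2 \<le> A v (v - z) - A z (v - z)" using sm unfolding SM_def by blast
  have x0nz: "x0 \<noteq> 0" using x0 F_lin Alin by (metis bounded_linear.linear diff_self linear_0)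
  have Lge: "\<alpha> \<le> L \<theta>" if th: "\<theta> > 0" for \<theta>
  proof -
    define v where "v = (\<theta> / norm x0) *\<^sub>R x0"
    have nv: "norm v = \<theta>" using x0nz th by (simp add: v_def)
    have "\<alpha> * (norm v)\<^sup>2 \<le> A v v - A 0 v" using SMi[of v 0] by simp
    also have "\<dots> \<le> L \<theta> * norm v * norm v" using Lip[of \<theta> v 0 v] th nv by simp
    finally have "\<alpha> * \<theta>^2 \<le> L \<theta> * \<theta>^2" by (simp add: nv power2_eq_square)
    then show ?thesis using th by simp
  qed
  have sq: "sqrt (L (3 * M) / \<alpha>) \<ge> 0" using Lpos[of "3*M"] Mpos alpha by simp
  have tauM: "M \<le> \<tau>" unfolding \<tau>_def using sq Mpos by simp
  have taupos: "\<tau> > 0" using tauM Mpos by simp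
  define L2 where "L2 = L (2 * \<tau>)"
  define L5 where "L5 = L (5 * \<tau>)"
  have L2pos: "L2 > 0" and L5pos: "L5 > 0" using Lpos taupos by (simp_all add: L2_def L5_def)
  have aL2: "\<alpha> \<le> L2" and aL5: "\<alpha> \<le> L5" using Lge taupos by (simp_all add: L2_def L5_def)
  have d1: "\<delta> < 1 / L5" and d2: "\<delta> < 2 * \<alpha> / L2\<^sup>2"
    using delta(2) by (simp_all add: L2_def L5_def \<tau>_def M_def)
  have dL5: "\<delta> * L5 < 1" using d1 L5pos by (simp add: field_simps)
  have dalpha: "\<delta> * \<alpha> \<le> 1" using dL5 aL5 delta(1) by (smt (verit) mult_left_mono)
  have "\<delta> * L2 * L2 < 2 * \<alpha>" using d2 L2pos by (simp add: field_simps power2_eq_square)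
  also have "\<dots> \<le> 2 * L2" using aL2 by simp
  finally have dL2: "\<delta> * L2 \<le> 2" using L2pos by simp
  have wbound: "norm w \<le> \<tau>" using bound by (simp add: w_def \<tau>_def M_def)
  have u00: "u 0 0 \<in> X" using run unfolding ailfem_level_run_def by blast
  have runk: "\<And>j. j \<in> {1..k+1} \<Longrightarrow> u j 0 = Ufin u ib (j - 1) \<and> 1 \<le> ib j \<and>
        (\<forall>i\<in>{1..ib j}. u j i = \<Psi> (zar_rhs A F \<delta> (Ufin u ib (j - 1))) (u j (i - 1))) \<and>
        alg_stop \<eta> lamlin lamalg imin u j (ib j)"
    using run unfolding ailfem_level_run_def by blast
  have zlin: "\<And>z. bounded_linear (zar_rhs A F \<delta> z)"
    unfolding zar_rhs_def
    by (intro bounded_linear_add bounded_linear_inner_right bounded_linear_compose[OF bounded_linear_mult_right]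
        bounded_linear_sub F_lin Alin)
  have sol: "\<And>\<phi> z zs. bounded_linear \<phi> \<Longrightarrow> riesz_in X \<phi> zs \<Longrightarrow> z \<in> X \<Longrightarrow>
        \<Psi> \<phi> z \<in> X \<and> norm (zs - \<Psi> \<phi> z) \<le> qalg * norm (zs - z)"
    using solver unfolding alg_solver_def by blast
  have q01: "0 < qalg" "qalg < 1" using solver unfolding alg_solver_def by auto
  have inner_mem: "\<forall>i \<le> ib j. u j i \<in> X" if j: "j \<in> {1..k+1}" "Ufin u ib (j - 1) \<in> X" for j
  proof (intro allI impI)
    fix i assume "i \<le> ib j"
    then show "u j i \<in> X"
    proof (induction i)
      case 0 then show ?case using runk[OF j(1)] j(2) by simp
    next
      case (Suc i)
      obtain zs where zs: "riesz_in X (zar_rhs A F \<delta> (Ufin u ib (j - 1))) zs"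
        using riesz_fd[OF Xl zlin] by blast
      have "u j (Suc i) = \<Psi> (zar_rhs A F \<delta> (Ufin u ib (j - 1))) (u j i)"
        using runk[OF j(1)] Suc.prems by force
      then show ?case using sol[OF zlin zs] Suc by simp
    qed
  qed
  have mem: "Ufin u ib j \<in> X" if "j \<le> k + 1" for j
    using that
  proof (induction j)
    case 0 then show ?case using u00 by (simp add: Ufin_def)
  next
    case (Suc j)
    have "\<forall>i \<le> ib (Suc j). u (Suc j) i \<in> X" using inner_mem[of "Suc j"] Suc by simp
    then show ?case by (simp add: Ufin_def)
  qed
  have wX: "w \<in> X" using mem[of k] by (simp add: w_def)
  obtain us where us: "riesz_in X (zar_rhs A F \<delta> w) us" using riesz_fd[OF Xl zlin] by blast
  have k1: "k + 1 \<in> {1..k+1}" by simp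
  have contr: "norm (us - u (k+1) i) \<le> qalg ^ i * norm (us - w) \<and> u (k+1) i \<in> X" if "i \<le> ib (k+1)" for i
    using that
  proof (induction i)
    case 0 then show ?case using runk[OF k1] wX by (simp add: w_def)
  next
    case (Suc i)
    have "u (k+1) (Suc i) = \<Psi> (zar_rhs A F \<delta> w) (u (k+1) i)"
      using runk[OF k1] Suc.prems by (force simp: w_def)
    then have "u (k+1) (Suc i) \<in> X \<and> norm (us - u (k+1) (Suc i)) \<le> qalg * norm (us - u (k+1) i)"
      using sol[OF zlin us] Suc by simp
    moreover have "qalg * norm (us - u (k+1) i) \<le> qalg * (qalg ^ i * norm (us - w))"
      using Suc q01 by (simp add: mult_left_mono)
    ultimately show ?case by simp
  qed
  define Q where "Q = qalg ^ imin"
  have ibge: "imin \<le> ib (k+1)" using runk[OF k1] unfolding alg_stop_def by blast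
  have "qalg ^ ib (k+1) \<le> Q" unfolding Q_def using ibge q01 by (simp add: power_decreasing)
  then have "qalg ^ ib (k+1) * norm (us - w) \<le> Q * norm (us - w)" by (simp add: mult_right_mono)
  then have uu': "norm (us - u') \<le> Q * norm (us - w)" and u'X: "u' \<in> X"
    using contr[of "ib (k+1)"] by (simp_all add: u'_def Ufin_def)
  have Q0: "0 \<le> Q" "Q \<le> 1/3" using q01 qmin by (simp_all add: Q_def)
  define a where "a = us - w"
  define e where "e = u' - w"
  have aX: "a \<in> X" and eX: "e \<in> X"
    using us wX u'X Xl unfolding a_def e_def riesz_in_def fd_subspace_def by (simp_all add: subspace_diff)
  have inner_a: "inner a v = \<delta> * (F v - A w v)" if "v \<in> X" for v
    using us that unfolding riesz_in_def zar_rhs_def a_def by (simp add: inner_diff_left)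
  have "(norm a)\<^sup>2 = \<delta> * ((F a - A 0 a) + (A w (- a) - A 0 (- a)))"
    using inner_a[OF aX] Aneg by (simp add: power2_norm_eq_inner algebra_simps)
  also have "\<dots> \<le> \<delta> * (\<alpha> * M * norm a + L2 * norm w * norm a)"
  proof -
    have "F a - A 0 a \<le> \<alpha> * M * norm a" using onorm[OF FA0, of a] onM by simp
    moreover have "A w (- a) - A 0 (- a) \<le> L2 * norm w * norm a"
      using Lip[of "2*\<tau>" w 0 "- a"] taupos wbound by (simp add: L2_def)
    ultimately show ?thesis using delta(1) by (intro mult_left_mono) auto
  qed
  finally have "norm a * norm a \<le> norm a * (\<delta> * \<alpha> * M + \<delta> * L2 * norm w)"
    by (simp add: power2_eq_square algebra_simps)
  then have "norm a \<le> \<delta> * \<alpha> * M + \<delta> * L2 * norm w"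
    using delta(1) alpha Mpos L2pos by (cases "norm a = 0") (auto simp: mult_le_cancel_left)
  also have "\<dots> \<le> 1 * M + 2 * \<tau>"
  proof (intro add_mono mult_right_mono)
    show "\<delta> * \<alpha> \<le> 1" by (rule dalpha)
    have "\<delta> * L2 * norm w \<le> 2 * norm w" using dL2 by (simp add: mult_right_mono)
    then show "\<delta> * L2 * norm w \<le> 2 * \<tau>" using wbound by simp
  qed (use Mpos in simp)
  finally have abound: "norm a \<le> M + 2 * \<tau>" by simp
  have ue: "us - u' = a - e" by (simp add: a_def e_def)
  have "norm e \<le> norm a + norm (a - e)" by (metis add_diff_cancel_left' diff_add_cancel norm_triangle_ineq4 ue norm_minus_commute)
  also have "\<dots> \<le> norm a + Q * norm a" using uu' ue a_def by simp
  also have "\<dots> \<le> (4/3) * norm a" using Q0 mult_right_mono[of Q "1/3" "norm a"] by simp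
  finally have ebound: "norm e \<le> 4 * \<tau>" using abound tauM by simp
  have "norm a \<le> norm (a - e) + norm e" by (metis diff_add_cancel norm_triangle_ineq)
  moreover have "norm (a - e) \<le> Q * norm a" using uu' ue a_def by simp
  ultimately have aQ: "(1 - Q) * norm a \<le> norm e" by (simp add: algebra_simps)
  have "(norm (a - e))\<^sup>2 \<le> (norm a)\<^sup>2"
  proof -
    have "norm (a - e) \<le> Q * norm a" using uu' ue a_def by simp
    also have "\<dots> \<le> 1 * norm a" using Q0 by (intro mult_right_mono) auto
    finally have "norm (a - e) \<le> norm a" by simp
    then show ?thesis by (simp add: power_mono)
  qed
  then have ae: "(norm e)\<^sup>2 / 2 \<le> inner a e"
    using dot_norm_neg[of a e] by simp
  define g where "g t = energy P F (w + t *\<^sub>R e)" for t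
  define D where "D t = A (w + t *\<^sub>R e) e - F e" for t
  have gder: "\<And>t. (g has_real_derivative D t) (at t)"
    unfolding g_def D_def by (rule pot_deriv[OF pot F_lin])
  have lowD: "\<alpha> * (norm e)\<^sup>2 * t \<le> D t - D 0" if t: "0 \<le> t" "t \<le> 1" for t
  proof (cases "t = 0")
    case True then show ?thesis by simp
  next
    case False
    then have tp: "t > 0" using t by simp
    have "\<alpha> * (norm (t *\<^sub>R e))\<^sup>2 \<le> A (w + t *\<^sub>R e) (t *\<^sub>R e) - A w (t *\<^sub>R e)"
      using SMi[of "w + t *\<^sub>R e" w] by simp
    also have "\<dots> = t * (D t - D 0)" by (simp add: D_def Ascale algebra_simps)
    finally have "t * (\<alpha> * (norm e)\<^sup>2 * t) \<le> t * (D t - D 0)"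
      using tp by (simp add: power2_eq_square algebra_simps)
    then show ?thesis using tp by simp
  qed
  have upD: "D t - D 0 \<le> L5 * (norm e)\<^sup>2 * t" if t: "0 \<le> t" "t \<le> 1" for t
  proof -
    have "norm (w + t *\<^sub>R e) \<le> norm w + t * norm e" using t by (metis abs_of_nonneg norm_scaleR norm_triangle_ineq)
    also have "\<dots> \<le> \<tau> + 1 * (4 * \<tau>)" using t wbound ebound by (intro add_mono mult_mono) auto
    finally have n1: "norm (w + t *\<^sub>R e) \<le> 5 * \<tau>" by simp
    have "t * norm e \<le> 1 * (4 * \<tau>)" using t ebound by (intro mult_mono) auto
    then have "norm (t *\<^sub>R e) \<le> 1 * (4 * \<tau>)" using t by simp
    then have "A (w + t *\<^sub>R e) e - A w e \<le> L5 * norm (t *\<^sub>R e) * norm e"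
      using Lip[of "5*\<tau>" "w + t *\<^sub>R e" w e] n1 taupos by (simp add: L5_def)
    then show ?thesis using t by (simp add: D_def power2_eq_square algebra_simps)
  qed
  have g1: "D 0 + \<alpha> * (norm e)\<^sup>2 / 2 \<le> g 1 - g 0" by (rule quad_lower[OF gder lowD])
  have g2: "g 1 - g 0 \<le> D 0 + L5 * (norm e)\<^sup>2 / 2" by (rule quad_upper[OF gder upD])
  have D0: "D 0 = - inner a e / \<delta>" using inner_a[OF eX] delta(1) by (simp add: D_def)
  define d where "d = norm e"
  define dE where "dE = g 0 - g 1"
  have dE_lo: "inner a e / \<delta> - L5 * d\<^sup>2 / 2 \<le> dE" using g2 D0 by (simp add: dE_def d_def)
  have dE_hi: "dE \<le> inner a e / \<delta> - \<alpha> * d\<^sup>2 / 2" using g1 D0 by (simp add: dE_def d_def)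
  have c1: "0 \<le> (1 / (2 * \<delta>) - L5 / 2) * d\<^sup>2"
  proof -
    have "L5 \<le> 1 / \<delta>" using dL5 delta(1) by (simp add: field_simps)
    then show ?thesis by simp
  qed
  have c2: "(1 / (2 * \<delta>) - L5 / 2) * d\<^sup>2 \<le> dE"
  proof -
    have "d\<^sup>2 / 2 / \<delta> \<le> inner a e / \<delta>" using divide_right_mono[OF ae, of \<delta>] delta(1) by (simp add: d_def)
    then show ?thesis using dE_lo by (simp add: algebra_simps)
  qed
  have c3: "dE \<le> (1 / (\<delta> * (1 - Q)) - \<alpha> / 2) * d\<^sup>2"
  proof -
    have Qlt: "0 < 1 - Q" using Q0 by simp
    have "inner a e \<le> norm a * d" using norm_cauchy_schwarz[of a e] by (simp add: d_def)
    also have "norm a * d \<le> d / (1 - Q) * d"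
      using aQ Qlt by (intro mult_right_mono) (simp_all add: d_def field_simps)
    finally have X: "inner a e \<le> d / (1 - Q) * d" .
    have "inner a e / \<delta> \<le> d / (1 - Q) * d / \<delta>" by (rule divide_right_mono[OF X]) (use delta(1) in simp)
    moreover have E: "d / (1 - Q) * d / \<delta> = 1 / (\<delta> * (1 - Q)) * d\<^sup>2"
      using Qlt delta(1) by (simp add: power2_eq_square field_simps)
    ultimately have "dE \<le> 1 / (\<delta> * (1 - Q)) * d\<^sup>2 - \<alpha> * d\<^sup>2 / 2" using dE_hi by linarith
    then show ?thesis by (simp add: left_diff_distrib)
  qed
  have gw: "g 0 = energy P F w" "g 1 = energy P F u'" by (simp_all add: g_def e_def)
  have r1: "energy P F w - energy P F u' = dE" by (simp add: dE_def gw)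
  have r2: "norm (u' - w) = d" by (simp add: d_def e_def)
  show ?thesis
    unfolding Let_def
    unfolding M_def[symmetric]
    unfolding \<tau>_def[symmetric]
    unfolding w_def[symmetric] u'_def[symmetric]
    unfolding L5_def[symmetric] Q_def[symmetric] r1 r2
    using c1 c2 c3 by blast
qed

end
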